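(* Let $N\ge 0$ and let $\mu=(\mu_1,\dots,\mu_{N+1})$ be a partition with $N+1$ parts. Then, for all $z_1,\dots,z_{N+1}$ (with pairwise distinct values so that the defining quotients make sense, the identity then extending polynomially), $$G_\mu(z_1,\dots,z_N,z_{N+1};\beta)=\sum_{\lambda:\ \mu\succ\lambda} G_{\mu/\lambda}(z_{N+1};\beta)\,G_\lambda(z_1,\dots,z_N;\beta),$$ where the sum runs over all partitions $\lambda=(\lambda_1,\dots,\lambda_N)$ with $N$ parts interlacing with $\mu$. At $\beta=0$ this is the corresponding branching rule for Schur and skew Schur polynomials.
   Context: A "partition with $N$ parts" means a weakly decreasing sequence $\lambda=(\lambda_1,\dots,\lambda_N)$ of nonnegative integers (zeros allowed); $|\lambda|=\sum_j\lambda_j$. For such $\lambda$, variables $z_1,\dots,z_N$ and a parameter $\beta$, the Grothendieck polynomial is $$G_\lambda(z_1,\dots,z_N;\beta)=\frac{\det_{1\le j,k\le N}\big(z_j^{\lambda_k+N-k}(1+\beta z_j)^{k-1}\big)}{\prod_{1\le j<k\le N}(z_j-z_k)},$$ (a symmetric polynomial; for $N=0$ it equals $1$). For $\mu$ with $N+1$ parts and $\lambda$ with $N$ parts, write $\mu\succ\lambda$ ("interlace") iff $\mu_j\ge\lambda_j\ge\mu_{j+1}$ for $j=1,\dots,N$. The single-variable skew Grothendieck polynomial is $$G_{\mu/\lambda}(z;\beta)=\begin{cases} z^{|\mu|-|\lambda|}\prod_{j=1}^N\big(1+\beta z-\beta z\,\delta_{\mu_{j+1},\lambda_j}\big) & \text{if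 } \mu\succ\lambda,\\ 0&\text{otherwise,}\end{cases}$$ with $\delta$ the Kronecker delta. *)

theory Defs
  imports Complex_Main "HOL-Combinatorics.Permutations"
begin

text \<open>Partitions with N parts are lists of naturals of length N, weakly decreasing.
  Indices are 0-based: list entry k is the paper's lambda_(k+1); variable z j is z_(j+1).\<close>

definition is_partition :: "nat list \<Rightarrow> bool" where
  "is_partition lam \<longleftrightarrow> sorted_wrt (\<ge>) lam"

definition ldet :: "nat \<Rightarrow> (nat \<Rightarrow> nat \<Rightarrow> 'a::comm_ring_1) \<Rightarrow> 'a" where
  "ldet n M = (\<Sum>p\<in>{p. p permutes {..<n}}. of_int (sign p) * (\<Prod>j<n. M j (p j)))"

text \<open>Grothendieck polynomial G_lambda(z_1..z_N; beta), N = length lam.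
  Entry (j,k), 1-based: z_j^(lam_k + N - k) (1 + beta z_j)^(k-1).\<close>
definition groth :: "nat list \<Rightarrow> (nat \<Rightarrow> complex) \<Rightarrow> complex \<Rightarrow> complex" where
  "groth lam z \<beta> =
     (let N = length lam in
      ldet N (\<lambda>j k. z j ^ (lam ! k + N - 1 - k) * (1 + \<beta> * z j) ^ k)
      / (\<Prod>j<N. \<Prod>k\<in>{j<..<N}. (z j - z k)))"

definition interlace :: "nat list \<Rightarrow> nat list \<Rightarrow> bool" where
  "interlace mu lam \<longleftrightarrow> length mu = length lam + 1 \<and>
     (\<forall>j<length lam. mu ! j \<ge> lam ! j \<and> lam ! j \<ge> mu ! (j + 1))"

definition skew_groth :: "nat list \<Rightarrow> nat list \<Rightarrow> complex \<Rightarrow> complex \<Rightarrow> complex" where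
  "skew_groth mu lam x \<beta> =
     (if interlace mu lam then
        x ^ (sum_list mu - sum_list lam) *
        (\<Prod>j<length lam. (1 + \<beta> * x - \<beta> * x * (if mu ! (j + 1) = lam ! j then 1 else 0)))
      else 0)"

end

theory Submission imports Defs "Jordan_Normal_Form.Determinant" "HOL-Library.FuncSet"
begin


lemma tele:
  fixes x y \<beta> :: complex
  shows "(y - x) * (\<Sum>l\<in>{b..b+d}. x^(b+d-l) * (1 + \<beta>*x - \<beta>*x*(if b = l then 1 else 0)) * y^l)
     = (1+\<beta>*x)*y^(b+d+1) - x^(d+1) * y^b * (1+\<beta>*y)"
proof (induction d)
  case 0
  then show ?case by (simp add: algebra_simps)
next
  case (Suc d)
  have s: "{b..b+Suc d} = insert (b + Suc d) {b..b+d}" by auto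
  have "(\<Sum>l\<in>{b..b+Suc d}. x^(b+Suc d-l) * (1 + \<beta>*x - \<beta>*x*(if b = l then 1 else 0)) * y^l)
     = x * (\<Sum>l\<in>{b..b+d}. x^(b+d-l) * (1 + \<beta>*x - \<beta>*x*(if b = l then 1 else 0)) * y^l)
       + (1+\<beta>*x) * y^(b+Suc d)"
    unfolding s sum_distrib_left
    by (subst sum.insert) (auto intro!: sum.cong simp: Suc_diff_le)
  then have "(y - x) * (\<Sum>l\<in>{b..b+Suc d}. x^(b+Suc d-l) * (1 + \<beta>*x - \<beta>*x*(if b = l then 1 else 0)) * y^l)
     = x * ((y - x) * (\<Sum>l\<in>{b..b+d}. x^(b+d-l) * (1 + \<beta>*x - \<beta>*x*(if b = l then 1 else 0)) * y^l))
       + (y - x) * ((1+\<beta>*x) * y^(b+Suc d))"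
    by (simp only: distrib_left mult.assoc mult.left_commute)
  also have "\<dots> = x * ((1+\<beta>*x)*y^(b+d+1) - x^(d+1) * y^b * (1+\<beta>*y)) + (y - x) * ((1+\<beta>*x) * y^(b+Suc d))"
    by (simp only: Suc.IH)
  also have "\<dots> = (1+\<beta>*x)*y^(b+Suc d+1) - x^(Suc d+1) * y^b * (1+\<beta>*y)"
    by (simp add: algebra_simps)
  finally show ?case .
qed

lemma ldet_det: "ldet n M = det (mat n n (\<lambda>(j,k). M j k))"
  unfolding ldet_def by (subst det_def'[of _ n]) (auto simp: atLeast0LessThan intro!: sum.cong prod.cong)



lemma prod_perm_swap:
  assumes p: "p permutes {..<n}"
  shows "(\<Prod>j<n. FF (p j) j) = (\<Prod>k<n. FF k (inv_into UNIV p k))"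
proof -
  have "(\<Prod>k<n. FF k (inv_into UNIV p k)) = (\<Prod>j<n. (\<lambda>k. FF k (inv_into UNIV p k)) (p j))"
    using prod.permute[OF p, of "\<lambda>k. FF k (inv_into UNIV p k)"] by (simp add: comp_def)
  also have "\<dots> = (\<Prod>j<n. FF (p j) j)" using permutes_inverses(2)[OF p] by simp
  finally show ?thesis by simp
qed

lemma ldet_multilin:
  fixes c :: "nat \<Rightarrow> nat \<Rightarrow> 'a::comm_ring_1"
  assumes fin: "\<And>k. k<n \<Longrightarrow> finite (I k)"
  shows "ldet n (\<lambda>j k. \<Sum>l\<in>I k. c k l * g k l j)
       = (\<Sum>f\<in>PiE {..<n} I. (\<Prod>k<n. c k (f k)) * ldet n (\<lambda>j k. g k (f k) j))"
proof -
  have "ldet n (\<lambda>j k. \<Sum>l\<in>I k. c k l * g k l j)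
      = (\<Sum>p\<in>{p. p permutes {..<n}}. of_int (sign p) *
           (\<Sum>f\<in>PiE {..<n} I. \<Prod>k<n. c k (f k) * g k (f k) (inv_into UNIV p k)))"
    unfolding ldet_def
  proof (rule sum.cong[OF refl])
    fix p assume "p \<in> {p. p permutes {..<n}}"
    then have p: "p permutes {..<n}" by simp
    show "of_int (sign p) * (\<Prod>j<n. \<Sum>l\<in>I (p j). c (p j) l * g (p j) l j) =
         of_int (sign p) * (\<Sum>f\<in>PiE {..<n} I. \<Prod>k<n. c k (f k) * g k (f k) (inv_into UNIV p k))"
      using prod_perm_swap[OF p, of "\<lambda>k j. \<Sum>l\<in>I k. c k l * g k l j"]
        prod_sum_PiE[of "{..<n}" I "\<lambda>k l. c k l * g k l (inv_into UNIV p k)"] fin by simp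
  qed
  also have "\<dots> = (\<Sum>f\<in>PiE {..<n} I. \<Sum>p\<in>{p. p permutes {..<n}}. of_int (sign p) *
           (\<Prod>k<n. c k (f k) * g k (f k) (inv_into UNIV p k)))"
    by (simp add: sum_distrib_left sum.swap[of _ "{p. p permutes {..<n}}"])
  also have "\<dots> = (\<Sum>f\<in>PiE {..<n} I. (\<Prod>k<n. c k (f k)) * ldet n (\<lambda>j k. g k (f k) j))"
    unfolding ldet_def sum_distrib_left
  proof (intro sum.cong refl)
    fix f p assume "p \<in> {p. p permutes {..<n}}"
    then have p: "p permutes {..<n}" by simp
    show "of_int (sign p) * (\<Prod>k<n. c k (f k) * g k (f k) (inv_into UNIV p k)) =
          (\<Prod>k<n. c k (f k)) * (of_int (sign p) * (\<Prod>j<n. g (p j) (f (p j)) j))"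
      using prod_perm_swap[OF p, of "\<lambda>k j. g k (f k) j"] by (simp add: prod.distrib algebra_simps)
  qed
  finally show ?thesis .
qed



lemma colop:
  fixes x y \<beta> :: complex
  assumes "b \<le> a" "k < N"
  shows "(y - x) * (\<Sum>l\<in>{b..a}. x^(a-l)*(1+\<beta>*x-\<beta>*x*(if b = l then 1 else 0))*(y^(l+N-1-k)*(1+\<beta>*y)^k))
    = (1+\<beta>*x)*(y^(a+N-k)*(1+\<beta>*y)^k) - x^(a-b+1)*(y^(b+N-(k+1))*(1+\<beta>*y)^(k+1))"
proof -
  define d where "d = a - b"
  have a: "a = b + d" using assms d_def by simp
  have "(\<Sum>l\<in>{b..a}. x^(a-l)*(1+\<beta>*x-\<beta>*x*(if b = l then 1 else 0))*(y^(l+N-1-k)*(1+\<beta>*y)^k))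
     = (y^(N-1-k)*(1+\<beta>*y)^k) * (\<Sum>l\<in>{b..b+d}. x^(b+d-l) * (1 + \<beta>*x - \<beta>*x*(if b = l then 1 else 0)) * y^l)"
    unfolding a sum_distrib_left
  proof (intro sum.cong refl)
    fix l assume "l \<in> {b..b+d}"
    have "l + N - 1 - k = (N - 1 - k) + l" using assms by simp
    then show "x^(b+d-l)*(1+\<beta>*x-\<beta>*x*(if b = l then 1 else 0))*(y^(l+N-1-k)*(1+\<beta>*y)^k) =
      y^(N-1-k)*(1+\<beta>*y)^k * (x^(b+d-l) * (1 + \<beta>*x - \<beta>*x*(if b = l then 1 else 0)) * y^l)"
      by (simp add: power_add algebra_simps)
  qed
  then have "(y - x) * (\<Sum>l\<in>{b..a}. x^(a-l)*(1+\<beta>*x-\<beta>*x*(if b = l then 1 else 0))*(y^(l+N-1-k)*(1+\<beta>*y)^k))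
     = (y^(N-1-k)*(1+\<beta>*y)^k) * ((y - x) * (\<Sum>l\<in>{b..b+d}. x^(b+d-l) * (1 + \<beta>*x - \<beta>*x*(if b = l then 1 else 0)) * y^l))"
    by simp
  also have "\<dots> = (y^(N-1-k)*(1+\<beta>*y)^k) * ((1+\<beta>*x)*y^(b+d+1) - x^(d+1) * y^b * (1+\<beta>*y))"
    by (simp only: tele)
  also have "\<dots> = (1+\<beta>*x)*(y^((N-1-k)+(b+d+1))*(1+\<beta>*y)^k) - x^(d+1)*(y^((N-1-k)+b)*(1+\<beta>*y)^(k+1))"
    by (simp add: power_add algebra_simps)
  also have "(N-1-k)+(b+d+1) = a+N-k" using assms a by simp
  also have "(N-1-k)+b = b+N-(k+1)" using assms by simp
  also have "d + 1 = a - b + 1" using d_def by simp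
  finally show ?thesis .
qed


lemma sum_two_if:
  fixes g :: "nat \<Rightarrow> 'a::comm_ring_1"
  shows "(\<Sum>i\<in>{0..<n}. g i * (if i = k then a else if i = Suc k then b else 0))
      = (if k < n then g k * a else 0) + (if Suc k < n then g (Suc k) * b else 0)"
proof -
  have "(\<Sum>i\<in>{0..<n}. g i * (if i = k then a else if i = Suc k then b else 0))
      = (\<Sum>i\<in>{0..<n}. (if i = k then g i * a else 0) + (if i = Suc k then g i * b else 0))"
    by (intro sum.cong) auto
  also have "\<dots> = (if k < n then g k * a else 0) + (if Suc k < n then g (Suc k) * b else 0)"
    by (simp add: sum.distrib)
  finally show ?thesis .
qed

lemma mainalg:
  fixes z :: "nat \<Rightarrow> complex" and \<beta> x :: complex
  assumes x: "x = z N"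
    and mono: "\<And>k. k < N \<Longrightarrow> mu!(k+1) \<le> mu!k"
    and f_def: "\<And>k y. f k y = y^(mu!k + N - k)*(1+\<beta>*y)^k"
    and C_def: "\<And>k y. C k y = (\<Sum>l\<in>{mu!(k+1)..mu!k}. x^(mu!k - l)*(1+\<beta>*x-\<beta>*x*(if mu!(k+1) = l then 1 else 0))*(y^(l+N-1-k)*(1+\<beta>*y)^k))"
  shows "ldet (N+1) (\<lambda>j k. f k (z j)) * (1+\<beta>*x)^N
     = x^(mu!N) * (1+\<beta>*x)^N * ((\<Prod>j<N. (z j - x)) * ldet N (\<lambda>j k. C k (z j)))"
proof -
  have col: "(y - x) * C k y = (1+\<beta>*x) * f k y - x^(mu!k - mu!(k+1) + 1) * f (k+1) y"
    if "k < N" for k y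
    unfolding C_def f_def using colop[OF mono[OF that] that, where x=x and y=y and \<beta>=\<beta>] by simp
  define t where "t k = - (x^(mu!k - mu!(k+1) + 1))" for k
  define A where "A = mat (N+1) (N+1) (\<lambda>(j,k). f k (z j))"
  define E where "E = mat (N+1) (N+1) (\<lambda>(i,k). if i = k then (if k < N then 1+\<beta>*x else 1)
                        else if i = Suc k then t k else 0)"
  define B where "B = A * E"
  have A: "A \<in> carrier_mat (N+1) (N+1)" and E: "E \<in> carrier_mat (N+1) (N+1)"
    and B: "B \<in> carrier_mat (N+1) (N+1)"
    unfolding A_def E_def B_def by auto
  have dE: "det E = (1+\<beta>*x)^N"
  proof -
    have "det E = prod_list (diag_mat E)"
      by (rule det_lower_triangular[OF _ E]) (auto simp: E_def)
    also have "\<dots> = (\<Prod>i\<in>{0..<N+1}. E $$ (i,i))"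
      unfolding diag_mat_def using E by (simp add: prod.distinct_set_conv_list[symmetric])
    also have "\<dots> = (\<Prod>i\<in>{0..<N+1}. if i < N then 1+\<beta>*x else 1)"
      by (intro prod.cong) (auto simp: E_def)
    also have "\<dots> = (1+\<beta>*x)^N"
      by (simp add: prod.If_cases atLeast0LessThan)
    finally show ?thesis .
  qed
  have Bent: "B $$ (j,k) = (if k < N then (1+\<beta>*x) * f k (z j) + t k * f (k+1) (z j) else f k (z j))"
    if "j < N+1" "k < N+1" for j k
  proof -
    have "B $$ (j,k) = (\<Sum>i\<in>{0..<N+1}. f i (z j) * (if i = k then (if k < N then 1+\<beta>*x else 1)
                        else if i = Suc k then t k else 0))"
      unfolding B_def using that A E
      by (simp add: scalar_prod_def A_def E_def)
    also have "\<dots> = (if k < N then (1+\<beta>*x) * f k (z j) + t k * f (k+1) (z j) else f k (z j))"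
      by (subst sum_two_if) (use that in auto)
    finally show ?thesis .
  qed
  have Bent2: "B $$ (j,k) = (z j - x) * C k (z j)" if "j < N+1" "k < N" for j k
    using Bent[of j k] that col[of k "z j"] by (simp add: t_def)
  have dB: "det B = f N x * det (mat N N (\<lambda>(j,k). (z j - x) * C k (z j)))"
  proof -
    have "det B = (\<Sum>k<N+1. B $$ (N,k) * cofactor B N k)"
      by (rule laplace_expansion_row[OF B]) simp
    also have "\<dots> = B $$ (N,N) * cofactor B N N"
    proof -
      have z: "\<And>k. k < N \<Longrightarrow> B $$ (N,k) = 0" using Bent2 x by simp
      show ?thesis by (simp add: z)
    qed
    also have "cofactor B N N = det (mat_delete B N N)"
      unfolding cofactor_def by simp
    also have "mat_delete B N N = mat N N (\<lambda>(j,k). (z j - x) * C k (z j))"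
      using B by (intro eq_matI) (auto simp: mat_delete_def Bent2)
    also have "B $$ (N,N) = f N x" using Bent[of N N] x by simp
    finally show ?thesis .
  qed
  have dM: "det (mat N N (\<lambda>(j,k). (z j - x) * C k (z j))) = (\<Prod>j<N. (z j - x)) * ldet N (\<lambda>j k. C k (z j))"
    unfolding ldet_det[symmetric] ldet_def
    by (simp add: prod.distrib[symmetric] sum_distrib_left mult.left_commute)
  have dBm: "det B = det A * det E" unfolding B_def by (rule det_mult[OF A E])
  have dA: "det A = ldet (N+1) (\<lambda>j k. f k (z j))" unfolding A_def ldet_det by simp
  have fN: "f N x = x^(mu!N) * (1+\<beta>*x)^N" using f_def by simp
  have "ldet (N+1) (\<lambda>j k. f k (z j)) * (1+\<beta>*x)^N = det B" using dBm dA dE by simp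
  also have "\<dots> = x^(mu!N) * (1+\<beta>*x)^N * ((\<Prod>j<N. (z j - x)) * ldet N (\<lambda>j k. C k (z j)))"
    unfolding dB dM fN by simp
  finally show ?thesis .
qed

lemma ldet_cong:
  assumes "\<And>j k. j < n \<Longrightarrow> k < n \<Longrightarrow> M j k = M' j k"
  shows "ldet n M = ldet n M'"
  unfolding ldet_def
proof (rule sum.cong[OF refl])
  fix p assume "p \<in> {p. p permutes {..<n}}"
  then have p: "p permutes {..<n}" by simp
  have "(\<Prod>j<n. M j (p j)) = (\<Prod>j<n. M' j (p j))"
  proof (rule prod.cong[OF refl])
    fix j assume j: "j \<in> {..<n}"
    then have "p j < n" using permutes_in_image[OF p, of j] by auto
    then show "M j (p j) = M' j (p j)" using assms j by simp
  qed
  then show "of_int (sign p) * (\<Prod>j<n. M j (p j)) = of_int (sign p) * (\<Prod>j<n. M' j (p j))"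
    by simp
qed

lemma vandermonde_split:
  fixes z :: "nat \<Rightarrow> complex"
  shows "(\<Prod>j<N+1. \<Prod>k\<in>{j<..<N+1}. (z j - z k))
       = (\<Prod>j<N. \<Prod>k\<in>{j<..<N}. (z j - z k)) * (\<Prod>j<N. (z j - z N))"
proof -
  have "(\<Prod>j<N+1. \<Prod>k\<in>{j<..<N+1}. (z j - z k)) = (\<Prod>j<N. \<Prod>k\<in>{j<..<N+1}. (z j - z k))"
  proof -
    have "{N<..<N+1} = {}" by auto
    then show ?thesis by simp
  qed
  also have "\<dots> = (\<Prod>j<N. (z j - z N) * (\<Prod>k\<in>{j<..<N}. (z j - z k)))"
  proof (intro prod.cong refl)
    fix j assume "j \<in> {..<N}"
    then have "{j<..<N+1} = insert N {j<..<N}" by auto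
    then show "(\<Prod>k\<in>{j<..<N+1}. (z j - z k)) = (z j - z N) * (\<Prod>k\<in>{j<..<N}. (z j - z k))"
      by simp
  qed
  also have "\<dots> = (\<Prod>j<N. \<Prod>k\<in>{j<..<N}. (z j - z k)) * (\<Prod>j<N. (z j - z N))"
    by (simp add: prod.distrib mult.commute)
  finally show ?thesis .
qed

lemma part_mono:
  assumes "is_partition mu" "i \<le> j" "j < length mu"
  shows "mu ! j \<le> mu ! i"
  using assms unfolding is_partition_def
  by (cases "i = j") (auto simp: sorted_wrt_iff_nth_less)

lemma bij_lists:
  assumes mu: "is_partition mu" "length mu = N + 1"
  shows "bij_betw (\<lambda>f. map f [0..<N]) (PiE {..<N} (\<lambda>k. {mu!(k+1)..mu!k}))
      {lam. is_partition lam \<and> length lam = N \<and> interlace mu lam}"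
proof (rule bij_betw_imageI)
  show "inj_on (\<lambda>f. map f [0..<N]) (PiE {..<N} (\<lambda>k. {mu!(k+1)..mu!k}))"
  proof (rule inj_onI)
    fix f g assume f: "f \<in> PiE {..<N} (\<lambda>k. {mu!(k+1)..mu!k})" and g: "g \<in> PiE {..<N} (\<lambda>k. {mu!(k+1)..mu!k})"
      and e: "map f [0..<N] = map g [0..<N]"
    show "f = g"
    proof (rule PiE_ext[OF f g])
      fix i assume "i \<in> {..<N}"
      have "\<forall>x\<in>set [0..<N]. f x = g x" using e by (simp only: map_eq_conv)
      moreover have "i \<in> set [0..<N]" using \<open>i \<in> {..<N}\<close> by simp
      ultimately show "f i = g i" by blast
    qed
  qed
  show "(\<lambda>f. map f [0..<N]) ` PiE {..<N} (\<lambda>k. {mu!(k+1)..mu!k}) =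
      {lam. is_partition lam \<and> length lam = N \<and> interlace mu lam}"
  proof (intro equalityI subsetI)
    fix lam assume "lam \<in> (\<lambda>f. map f [0..<N]) ` PiE {..<N} (\<lambda>k. {mu!(k+1)..mu!k})"
    then obtain f where f: "f \<in> PiE {..<N} (\<lambda>k. {mu!(k+1)..mu!k})" and lam: "lam = map f [0..<N]" by auto
    have fk: "mu!(k+1) \<le> f k \<and> f k \<le> mu!k" if "k < N" for k
    proof -
      have "f k \<in> {mu!(k+1)..mu!k}" using PiE_mem[OF f, of k] that by simp
      then show ?thesis by simp
    qed
    have il: "interlace mu lam" unfolding interlace_def lam using fk mu(2) by simp
    have "is_partition lam"
      unfolding is_partition_def sorted_wrt_iff_nth_less
    proof (intro allI impI)
      fix i j assume ij: "i < j" "j < length lam"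
      then have "j < N" using lam by simp
      have "lam ! j \<le> mu ! j" using fk[of j] \<open>j < N\<close> lam by simp
      also have "\<dots> \<le> mu ! (i+1)" using part_mono[OF mu(1), of "i+1" j] ij \<open>j < N\<close> mu(2) by simp
      also have "\<dots> \<le> lam ! i" using fk[of i] ij \<open>j < N\<close> lam by simp
      finally show "lam ! j \<le> lam ! i" .
    qed
    then show "lam \<in> {lam. is_partition lam \<and> length lam = N \<and> interlace mu lam}"
      using il lam by simp
  next
    fix lam assume "lam \<in> {lam. is_partition lam \<and> length lam = N \<and> interlace mu lam}"
    then have l: "length lam = N" and il: "interlace mu lam" by auto
    define f where "f = restrict (\<lambda>k. lam ! k) {..<N}"
    have fP: "f \<in> PiE {..<N} (\<lambda>k. {mu!(k+1)..mu!k})"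
      unfolding f_def restrict_PiE_iff using il l unfolding interlace_def by simp
    have mf: "map f [0..<N] = lam"
      by (rule nth_equalityI) (auto simp: l f_def)
    show "lam \<in> (\<lambda>f. map f [0..<N]) ` PiE {..<N} (\<lambda>k. {mu!(k+1)..mu!k})"
      by (rule image_eqI[where f="\<lambda>f. map f [0..<N]", OF mf[symmetric] fP])
  qed
qed

lemma skew_eval:
  fixes x \<beta> :: complex
  assumes mu: "is_partition mu" "length mu = N + 1"
    and f: "f \<in> PiE {..<N} (\<lambda>k. {mu!(k+1)..mu!k})"
  shows "skew_groth mu (map f [0..<N]) x \<beta> = x^(mu!N) *
     (\<Prod>k<N. x^(mu!k - f k) * (1 + \<beta>*x - \<beta>*x*(if mu!(k+1) = f k then 1 else 0)))"
proof -
  have fk: "mu!(k+1) \<le> f k \<and> f k \<le> mu!k" if "k < N" for k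
  proof -
    have "f k \<in> {mu!(k+1)..mu!k}" using PiE_mem[OF f, of k] that by simp
    then show ?thesis by simp
  qed
  have il: "interlace mu (map f [0..<N])" unfolding interlace_def using fk mu(2) by simp
  have sm: "sum_list mu = (\<Sum>k<N. mu!k) + mu!N"
    using mu(2) by (simp add: sum_list_sum_nth atLeast0LessThan)
  have sl: "sum_list (map f [0..<N]) = (\<Sum>k<N. f k)"
    by (simp add: sum_list_sum_nth atLeast0LessThan)
  have le: "(\<Sum>k<N. f k) \<le> (\<Sum>k<N. mu!k)" using fk by (intro sum_mono) auto
  have sub: "(\<Sum>k<N. mu!k - f k) = (\<Sum>k<N. mu!k) - (\<Sum>k<N. f k)"
    using fk by (intro sum_subtractf_nat) auto
  have ex: "sum_list mu - sum_list (map f [0..<N]) = mu!N + (\<Sum>k<N. mu!k - f k)"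
    unfolding sm sl sub using le by simp
  show ?thesis
    unfolding skew_groth_def using il
    by (simp add: ex power_add power_sum prod.distrib)
qed
lemma main_nz:
  fixes N :: nat and mu :: "nat list" and z :: "nat \<Rightarrow> complex" and \<beta> :: complex
  assumes mu: "is_partition mu" "length mu = N + 1"
    and inj: "inj_on z {..N}" and nz: "1 + \<beta> * z N \<noteq> 0"
  shows "groth mu z \<beta> =
    (\<Sum>lam\<in>{lam. is_partition lam \<and> length lam = N \<and> interlace mu lam}.
        skew_groth mu lam (z N) \<beta> * groth lam z \<beta>)"
proof -
  define x where "x = z N"
  define f where "f = (\<lambda>k y. y^(mu!k + N - k)*(1+\<beta>*y)^k)"
  define I where "I = (\<lambda>k. {mu!(k+1)..mu!k})"
  define cc where "cc = (\<lambda>k l. x^(mu!k - l)*(1+\<beta>*x-\<beta>*x*(if mu!(k+1) = l then 1 else 0)))"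
  define g where "g = (\<lambda>k l j. z j^(l+N-1-k)*(1+\<beta>*z j)^k)"
  define C where "C = (\<lambda>k y. (\<Sum>l\<in>{mu!(k+1)..mu!k}. x^(mu!k - l)*(1+\<beta>*x-\<beta>*x*(if mu!(k+1) = l then 1 else 0))*(y^(l+N-1-k)*(1+\<beta>*y)^k)))"
  define V where "V = (\<Prod>j<N. \<Prod>k\<in>{j<..<N}. (z j - z k))"
  define P where "P = (\<Prod>j<N. (z j - x))"
  have mono: "\<And>k. k<N \<Longrightarrow> mu!(k+1) \<le> mu!k" using part_mono[OF mu(1)] mu(2) by simp
  have MA: "ldet (N+1) (\<lambda>j k. f k (z j)) * (1+\<beta>*x)^N = x^(mu!N)*(1+\<beta>*x)^N*(P * ldet N (\<lambda>j k. C k (z j)))"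
    unfolding P_def by (rule mainalg[where x=x and z=z and N=N and mu=mu and f=f and C=C and \<beta>=\<beta>]) (simp_all add: x_def mono[simplified] f_def C_def)
  have nz': "(1+\<beta>*x)^N \<noteq> 0" using nz x_def by simp
  have L0: "ldet (N+1) (\<lambda>j k. f k (z j)) = x^(mu!N) * (P * ldet N (\<lambda>j k. C k (z j)))"
  proof -
    have "ldet (N+1) (\<lambda>j k. f k (z j)) * (1+\<beta>*x)^N = (x^(mu!N) * (P * ldet N (\<lambda>j k. C k (z j)))) * (1+\<beta>*x)^N"
      using MA by (simp only: mult_ac)
    then show ?thesis by (rule mult_right_cancel[OF nz', THEN iffD1])
  qed
  have Ceq: "(\<lambda>j k. C k (z j)) = (\<lambda>j k. \<Sum>l\<in>I k. cc k l * g k l j)"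
    by (simp add: C_def I_def cc_def g_def mult.assoc)
  have MLin: "ldet N (\<lambda>j k. C k (z j)) = (\<Sum>h\<in>PiE {..<N} I. (\<Prod>k<N. cc k (h k)) * ldet N (\<lambda>j k. g k (h k) j))"
    unfolding Ceq by (rule ldet_multilin) (simp add: I_def)
  have G: "groth mu z \<beta> = ldet (N+1) (\<lambda>j k. f k (z j)) / (V * P)"
    unfolding groth_def Let_def mu(2) vandermonde_split V_def P_def x_def
    by (simp add: f_def)
  have Gl: "groth (map h [0..<N]) z \<beta> = ldet N (\<lambda>j k. g k (h k) j) / V" for h
  proof -
    have "ldet N (\<lambda>j k. z j ^ (map h [0..<N] ! k + N - 1 - k) * (1 + \<beta> * z j) ^ k) = ldet N (\<lambda>j k. g k (h k) j)"
      by (rule ldet_cong) (simp add: g_def)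
    then show ?thesis unfolding groth_def Let_def V_def by simp
  qed
  have P0: "P \<noteq> 0"
  proof -
    have "z j - z N \<noteq> 0" if "j < N" for j
      using inj that by (auto simp: inj_on_def)
    then show ?thesis unfolding P_def x_def by (simp add: prod_zero_iff)
  qed
  have "(\<Sum>lam\<in>{lam. is_partition lam \<and> length lam = N \<and> interlace mu lam}.
        skew_groth mu lam (z N) \<beta> * groth lam z \<beta>)
     = (\<Sum>h\<in>PiE {..<N} I. skew_groth mu (map h [0..<N]) (z N) \<beta> * groth (map h [0..<N]) z \<beta>)"
    unfolding I_def by (rule sum.reindex_bij_betw[OF bij_lists[OF mu], symmetric])
  also have "\<dots> = (\<Sum>h\<in>PiE {..<N} I. x^(mu!N) * ((\<Prod>k<N. cc k (h k)) * ldet N (\<lambda>j k. g k (h k) j)) / V)"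
  proof (rule sum.cong[OF refl])
    fix h assume "h \<in> PiE {..<N} I"
    then have "skew_groth mu (map h [0..<N]) x \<beta> = x^(mu!N) * (\<Prod>k<N. cc k (h k))"
      using skew_eval[OF mu, of h x \<beta>] unfolding I_def cc_def by simp
    then show "skew_groth mu (map h [0..<N]) (z N) \<beta> * groth (map h [0..<N]) z \<beta> =
       x^(mu!N) * ((\<Prod>k<N. cc k (h k)) * ldet N (\<lambda>j k. g k (h k) j)) / V"
      unfolding Gl x_def by simp
  qed
  also have "\<dots> = x^(mu!N) * ldet N (\<lambda>j k. C k (z j)) / V"
    unfolding MLin by (simp add: sum_divide_distrib sum_distrib_left)
  also have "\<dots> = groth mu z \<beta>"
    unfolding G L0 using P0 by simp
  finally show ?thesis by simp
qed

lemma cont_zero: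
  fixes F :: "complex \<Rightarrow> complex"
  assumes "continuous_on UNIV F" "\<And>b. b \<noteq> c \<Longrightarrow> F b = 0"
  shows "F c = 0"
proof -
  have "(F \<longlongrightarrow> F c) (at c)" using assms(1) by (simp add: continuous_on_def)
  moreover have "(F \<longlongrightarrow> 0) (at c)"
  proof (rule tendsto_eventually)
    show "\<forall>\<^sub>F b in at c. F b = 0"
      unfolding eventually_at_filter using assms(2) by simp
  qed
  ultimately show ?thesis using tendsto_unique[OF at_neq_bot] by blast
qed

lemma groth_cont: "continuous_on UNIV (\<lambda>b. groth lam z b)"
  unfolding groth_def Let_def ldet_def divide_inverse by (intro continuous_intros)

lemma skew_cont: "continuous_on UNIV (\<lambda>b. skew_groth mu lam x b)"
  unfolding skew_groth_def by (cases "interlace mu lam") (auto intro!: continuous_intros)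

theorem mainTheorem1:
  fixes N :: nat and mu :: "nat list" and z :: "nat \<Rightarrow> complex" and \<beta> :: complex
  assumes "is_partition mu" and "length mu = N + 1"
    and "inj_on z {..N}"
  shows "groth mu z \<beta> =
    (\<Sum>lam\<in>{lam. is_partition lam \<and> length lam = N \<and> interlace mu lam}.
        skew_groth mu lam (z N) \<beta> * groth lam z \<beta>)"
proof (cases "1 + \<beta> * z N = 0")
  case False
  then show ?thesis using main_nz assms by blast
next
  case True
  define F where "F = (\<lambda>b. groth mu z b - (\<Sum>lam\<in>{lam. is_partition lam \<and> length lam = N \<and> interlace mu lam}.
        skew_groth mu lam (z N) b * groth lam z b))"
  have "continuous_on UNIV F"
    unfolding F_def by (intro continuous_intros groth_cont skew_cont)
  moreover have "F b = 0" if "b \<noteq> \<beta>" for b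
  proof -
    have "1 + b * z N = (b - \<beta>) * z N" using True by (simp add: algebra_simps)
    moreover have "z N \<noteq> 0" using True by auto
    ultimately have "1 + b * z N \<noteq> 0" using that by simp
    then show ?thesis unfolding F_def using main_nz assms by simp
  qed
  ultimately have "F \<beta> = 0" by (rule cont_zero)
  then show ?thesis unfolding F_def by simp
qed

end
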